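(* Let $(Y,\lambda)\in\{-1,1\}\times\{-1,1\}^m$ follow the Ising model $$P(Y,\lambda)=\frac1Z\exp\Big(\theta_Y Y+\sum_i\theta_i\lambda_iY+\sum_{(i,j)\in E_\lambda}\theta_{ij}\lambda_i\lambda_j\Big),$$ where $E_\lambda$ is a set of unordered pairs of distinct sources. Then for every source $i$, with $a_i=\mathbb E[\lambda_iY]$, $$P(\lambda_i=1\mid Y=1)=P(\lambda_i=-1\mid Y=-1)=\frac{1+a_i}{2},\qquad P(\lambda_i=-1\mid Y=1)=P(\lambda_i=1\mid Y=-1)=\frac{1-a_i}{2}.$$
   Context: $Z$ is the normalizing constant. *)

theory Defs
  imports Complex_Main
begin

text \<open>Dependency edges E are unordered pairs of distinct
  sources, encoded as ordered pairs (i,j) with i < j < m; theta_E gives the weight of each edge.\<close>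

definition ising_space :: "nat \<Rightarrow> (int \<times> int list) set" where
  "ising_space m = {-1, 1} \<times> {l. length l = m \<and> set l \<subseteq> {-1, 1}}"

definition ising_weight ::
  "nat \<Rightarrow> real \<Rightarrow> (nat \<Rightarrow> real) \<Rightarrow> (nat \<times> nat \<Rightarrow> real) \<Rightarrow> (nat \<times> nat) set
    \<Rightarrow> int \<times> int list \<Rightarrow> real" where
  "ising_weight m thY th thE E w =
     (case w of (y, l) \<Rightarrow>
       exp (thY * of_int y
            + (\<Sum>i<m. th i * of_int (l ! i) * of_int y)
            + (\<Sum>p\<in>E. thE p * of_int (l ! fst p) * of_int (l ! snd p))))"

definition ising_Z ::
  "nat \<Rightarrow> real \<Rightarrow> (nat \<Rightarrow> real) \<Rightarrow> (nat \<times> nat \<Rightarrow> real) \<Rightarrow> (nat \<times> nat) set \<Rightarrow> real" where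
  "ising_Z m thY th thE E = (\<Sum>w\<in>ising_space m. ising_weight m thY th thE E w)"

definition ising_prob ::
  "nat \<Rightarrow> real \<Rightarrow> (nat \<Rightarrow> real) \<Rightarrow> (nat \<times> nat \<Rightarrow> real) \<Rightarrow> (nat \<times> nat) set
    \<Rightarrow> (int \<times> int list) set \<Rightarrow> real" where
  "ising_prob m thY th thE E A =
     (\<Sum>w\<in>ising_space m \<inter> A. ising_weight m thY th thE E w) / ising_Z m thY th thE E"

definition ising_cond_prob ::
  "nat \<Rightarrow> real \<Rightarrow> (nat \<Rightarrow> real) \<Rightarrow> (nat \<times> nat \<Rightarrow> real) \<Rightarrow> (nat \<times> nat) set
    \<Rightarrow> (int \<times> int list) set \<Rightarrow> (int \<times> int list) set \<Rightarrow> real" where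
  "ising_cond_prob m thY th thE E A B =
     ising_prob m thY th thE E (A \<inter> B) / ising_prob m thY th thE E B"

definition ising_expect ::
  "nat \<Rightarrow> real \<Rightarrow> (nat \<Rightarrow> real) \<Rightarrow> (nat \<times> nat \<Rightarrow> real) \<Rightarrow> (nat \<times> nat) set
    \<Rightarrow> (int \<times> int list \<Rightarrow> real) \<Rightarrow> real" where
  "ising_expect m thY th thE E f =
     (\<Sum>w\<in>ising_space m. f w * ising_weight m thY th thE E w) / ising_Z m thY th thE E"

end

theory Submission
  imports Defs
begin

lemma sum_space:
  "(\<Sum>w\<in>ising_space m. g w) =
     (\<Sum>l\<in>{l. length l = m \<and> set l \<subseteq> {-1, 1}}. g (1, l)) +
     (\<Sum>l\<in>{l. length l = m \<and> set l \<subseteq> {-1, 1}}. g (-1, l))"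
proof -
  have f: "finite {l. length l = m \<and> set l \<subseteq> ({-1, 1}::int set)}"
    using finite_lists_length_eq[of "{-1,1::int}" m] by (simp add: conj_commute)
  have "(\<Sum>w\<in>ising_space m. g w) = (\<Sum>x\<in>{-1,1::int}. \<Sum>y\<in>{l. length l = m \<and> set l \<subseteq> {-1, 1}}. g (x, y))"
    unfolding ising_space_def using f by (subst sum.cartesian_product) (simp add: case_prod_beta')
  then show ?thesis by (simp add: add.commute)
qed

lemma finL: "finite {l. length l = m \<and> set l \<subseteq> ({-1, 1}::int set)}"
  using finite_lists_length_eq[of "{-1,1::int}" m] by (simp add: conj_commute)

lemma weight_neg:
  assumes E: "E \<subseteq> {(j, k). j < k \<and> k < m}" and len: "length l = m"
  shows "ising_weight m thY th thE E (-1, map uminus l)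
       = exp (-2*thY) * ising_weight m thY th thE E (1, l)"
proof -
  have s1: "(\<Sum>i<m. th i * of_int (map uminus l ! i) * of_int (-1::int))
         = (\<Sum>i<m. th i * of_int (l ! i) * of_int (1::int))"
    by (rule sum.cong) (auto simp: len)
  have s2: "(\<Sum>p\<in>E. thE p * of_int (map uminus l ! fst p) * of_int (map uminus l ! snd p))
         = (\<Sum>p\<in>E. thE p * of_int (l ! fst p) * of_int (l ! snd p))"
    by (rule sum.cong) (use E len in auto)
  show ?thesis
    unfolding ising_weight_def using s1 s2
    by (simp add: exp_add[symmetric] del: of_int_minus of_int_1)
qed

theorem lemma2:
  fixes m :: nat and thY :: real and th :: "nat \<Rightarrow> real"
    and thE :: "nat \<times> nat \<Rightarrow> real" and E :: "(nat \<times> nat) set" and i :: nat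
  assumes "E \<subseteq> {(j, k). j < k \<and> k < m}"
    and "i < m"
  defines "a \<equiv> ising_expect m thY th thE E (\<lambda>(y, l). of_int (l ! i) * of_int y)"
  shows "ising_cond_prob m thY th thE E {w. snd w ! i = 1} {w. fst w = 1} = (1 + a) / 2
    \<and> ising_cond_prob m thY th thE E {w. snd w ! i = -1} {w. fst w = -1} = (1 + a) / 2
    \<and> ising_cond_prob m thY th thE E {w. snd w ! i = -1} {w. fst w = 1} = (1 - a) / 2
    \<and> ising_cond_prob m thY th thE E {w. snd w ! i = 1} {w. fst w = -1} = (1 - a) / 2"
proof -
  define L where "L = {l. length l = m \<and> set l \<subseteq> ({-1, 1}::int set)}"
  define W where "W y l = ising_weight m thY th thE E (y, l)" for y l
  define c where "c = exp (-2*thY)"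
  define F where "F y s = (\<Sum>l\<in>L. if l ! i = s then W y l else 0)" for y s
  have finL': "finite L" unfolding L_def by (rule finL)
  have Wpos: "W y l > 0" for y l unfolding W_def ising_weight_def by (simp split: prod.splits)
  have nth_in: "l ! i = 1 \<or> l ! i = -1" if "l \<in> L" for l
    using that assms(2) unfolding L_def by (auto dest!: nth_mem)
  have neg: "F (-1) (-s) = c * F 1 s" for s
  proof -
    have "F (-1) (-s) = (\<Sum>l\<in>L. if map uminus l ! i = -s then W (-1) (map uminus l) else 0)"
      unfolding F_def
      by (rule sum.reindex_bij_witness[of _ "map uminus" "map uminus"]) (auto simp: L_def)
    also have "\<dots> = (\<Sum>l\<in>L. c * (if l ! i = s then W 1 l else 0))"
      by (rule sum.cong) (use assms weight_neg in \<open>auto simp: L_def W_def c_def\<close>)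
    finally show ?thesis by (simp add: F_def sum_distrib_left)
  qed
  have pos1: "F 1 s > 0" if "s = 1 \<or> s = -1" for s
  proof -
    have mem: "(replicate m s)[i := s] \<in> L" using that unfolding L_def
      by (auto dest!: set_update_subset_insert[THEN subsetD])
    have "0 < (if (replicate m s)[i := s] ! i = s then W 1 ((replicate m s)[i := s]) else 0)"
      using assms(2) Wpos by simp
    also have "\<dots> \<le> F 1 s" unfolding F_def
      by (rule member_le_sum[OF mem _ finL']) (use Wpos in \<open>auto intro: less_imp_le\<close>)
    finally show ?thesis .
  qed
  have c0: "c > 0" unfolding c_def by simp
  let ?p = "F 1 1" and ?q = "F 1 (-1)"
  have Fm11: "F (-1) 1 = c * ?q" using neg[of "-1"] by simp
  have Fm1m1: "F (-1) (-1) = c * ?p" using neg[of 1] by simp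
  have Z: "ising_Z m thY th thE E = (1 + c) * (?p + ?q)"
  proof -
    have "\<And>y. (\<Sum>l\<in>L. W y l) = F y 1 + F y (-1)"
      unfolding F_def sum.distrib[symmetric] by (rule sum.cong) (use nth_in in auto)
    then show ?thesis unfolding ising_Z_def sum_space L_def[symmetric] W_def[symmetric]
      using Fm11 Fm1m1 by (simp add: algebra_simps)
  qed
  have P: "ising_prob m thY th thE E ({w. snd w ! i = s} \<inter> {w. fst w = y})
       = (if y = 1 then F 1 s else if y = -1 then F (-1) s else 0) / ising_Z m thY th thE E" for s y
  proof -
    have "(\<Sum>w\<in>ising_space m \<inter> ({w. snd w ! i = s} \<inter> {w. fst w = y}). ising_weight m thY th thE E w)
       = (\<Sum>w\<in>ising_space m. if w \<in> ({w. snd w ! i = s} \<inter> {w. fst w = y}) then ising_weight m thY th thE E w else 0)"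
      by (rule sum.inter_restrict) (simp add: ising_space_def finL)
    also have "\<dots> = (if y = 1 then F 1 s else if y = -1 then F (-1) s else 0)"
      unfolding sum_space L_def[symmetric] W_def[symmetric] F_def by auto
    finally show ?thesis unfolding ising_prob_def by simp
  qed
  have PB: "ising_prob m thY th thE E {w. fst w = y}
       = (if y = 1 then F 1 1 + F 1 (-1) else if y = -1 then F (-1) 1 + F (-1) (-1) else 0)
          / ising_Z m thY th thE E" for y
  proof -
    have "(\<Sum>w\<in>ising_space m \<inter> {w. fst w = y}. ising_weight m thY th thE E w)
       = (\<Sum>w\<in>ising_space m. if w \<in> {w. fst w = y} then ising_weight m thY th thE E w else 0)"
      by (rule sum.inter_restrict) (simp add: ising_space_def finL)
    also have "\<dots> = (if y = 1 then (\<Sum>l\<in>L. W 1 l) else if y = -1 then (\<Sum>l\<in>L. W (-1) l) else 0)"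
      unfolding sum_space L_def[symmetric] W_def[symmetric] by auto
    also have "\<dots> = (if y = 1 then F 1 1 + F 1 (-1) else if y = -1 then F (-1) 1 + F (-1) (-1) else 0)"
      unfolding F_def sum.distrib[symmetric] by (auto intro!: sum.cong dest: nth_in)
    finally show ?thesis unfolding ising_prob_def by simp
  qed
  have A: "a = (?p - ?q) / (?p + ?q)"
  proof -
    have e: "(\<Sum>l\<in>L. real_of_int (l ! i) * W y l) = F y 1 - F y (-1)" for y
      unfolding F_def sum_subtractf[symmetric] by (rule sum.cong) (use nth_in in auto)
    have "(\<Sum>w\<in>ising_space m. (case w of (y, l) \<Rightarrow> real_of_int (l ! i) * real_of_int y) * ising_weight m thY th thE E w)
       = (\<Sum>l\<in>L. real_of_int (l ! i) * W 1 l) - (\<Sum>l\<in>L. real_of_int (l ! i) * W (-1) l)"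
      unfolding sum_space L_def[symmetric] W_def[symmetric] by (simp add: sum_negf)
    also have "\<dots> = (F 1 1 - F 1 (-1)) - (F (-1) 1 - F (-1) (-1))" by (simp only: e)
    finally have "(\<Sum>w\<in>ising_space m. (case w of (y, l) \<Rightarrow> real_of_int (l ! i) * real_of_int y) * ising_weight m thY th thE E w)
       = (1 + c) * (?p - ?q)" using Fm11 Fm1m1 by (simp add: algebra_simps)
    then show ?thesis unfolding a_def ising_expect_def Z using c0 by simp
  qed
  have pp: "?p > 0" "?q > 0" using pos1 by auto
  have Zp: "ising_Z m thY th thE E > 0" unfolding Z using pp c0 by simp
  have cs: "c * ?p + c * ?q > 0" "?p + ?q > 0" using pp c0 by (simp_all add: add_pos_pos)
  show ?thesis
    unfolding ising_cond_prob_def P PB A using pp c0 Zp Fm11 Fm1m1 cs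
    by (auto simp: field_simps)
qed

end
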